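(* If $X_1,\dots,X_m$ ($m\ge2$) are isentropic, then the source $X_{\mathcal M}$ is Type $\mathcal S$; that is, the singleton partition $\mathcal S$ attains $\min_{\mathcal P}\Delta(\mathcal P)$.
   Context: Let $\mathcal M=\{1,\dots,m\}$, and let $X_{\mathcal M}$ be jointly distributed finite-valued random variables, with $X_A=(X_i:i\in A)$. $X_1,\dots,X_m$ are isentropic if $H(X_A)=H(X_B)$ for all nonempty $A,B\subseteq\mathcal M$ with $|A|=|B|$. For a partition $\mathcal P$ of $\mathcal M$ with $|\mathcal P|\ge2$, $\Delta(\mathcal P)=\frac1{|\mathcal P|-1}[\sum_{A\in\mathcal P}H(X_A)-H(X_{\mathcal M})]$. $\mathcal S=\{\{1\},\dots,\{m\}\}$, and the source is Type $\mathcal S$ if $\mathcal S$ minimizes $\Delta$ over all partitions with at least two cells. *)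

theory Defs
  imports "HOL-Probability.Probability_Mass_Function" "HOL-Library.Disjoint_Sets"
begin

text \<open>The joint distribution of X_1, X_2, ... is a pmf p on outcome vectors
  f :: nat => 'a, with X_i = f i.  X_A is the restriction of the outcome to A.\<close>

definition pmf_entropy :: "'b pmf \<Rightarrow> real" where
  "pmf_entropy q = - (\<Sum>x\<in>set_pmf q. pmf q x * log 2 (pmf q x))"

definition joint_entropy :: "(nat \<Rightarrow> 'a) pmf \<Rightarrow> nat set \<Rightarrow> real" where
  "joint_entropy p A = pmf_entropy (map_pmf (\<lambda>f. restrict f A) p)"

definition isentropic :: "(nat \<Rightarrow> 'a) pmf \<Rightarrow> nat set \<Rightarrow> bool" where
  "isentropic p M \<longleftrightarrow> (\<forall>A B. A \<subseteq> M \<longrightarrow> B \<subseteq> M \<longrightarrow> A \<noteq> {} \<longrightarrow> B \<noteq> {} \<longrightarrow>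
      card A = card B \<longrightarrow> joint_entropy p A = joint_entropy p B)"

definition Delta :: "(nat \<Rightarrow> 'a) pmf \<Rightarrow> nat set \<Rightarrow> nat set set \<Rightarrow> real" where
  "Delta p M P = (1 / (real (card P) - 1)) *
      ((\<Sum>A\<in>P. joint_entropy p A) - joint_entropy p M)"

definition singleton_partition :: "nat set \<Rightarrow> nat set set" where
  "singleton_partition M = (\<lambda>i. {i}) ` M"

definition type_S :: "(nat \<Rightarrow> 'a) pmf \<Rightarrow> nat set \<Rightarrow> bool" where
  "type_S p M \<longleftrightarrow> (\<forall>P. partition_on M P \<and> card P \<ge> 2 \<longrightarrow>
      Delta p M (singleton_partition M) \<le> Delta p M P)"

end

theory Submission imports Defs begin

lemma pmf_map_finite_sum:
  assumes "finite (set_pmf Q)"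
  shows "pmf (map_pmf g Q) y = (\<Sum>x\<in>{x\<in>set_pmf Q. g x = y}. pmf Q x)"
proof -
  have "pmf (map_pmf g Q) y = measure Q (g -` {y} \<inter> set_pmf Q)"
    by (simp add: pmf_map measure_Int_set_pmf)
  also have "g -` {y} \<inter> set_pmf Q = {x\<in>set_pmf Q. g x = y}" by auto
  also have "measure Q \<dots> = (\<Sum>x\<in>{x\<in>set_pmf Q. g x = y}. pmf Q x)"
    using assms by (intro measure_measure_pmf_finite) auto
  finally show ?thesis .
qed

lemma ent_map:
  assumes "finite (set_pmf Q)"
  shows "pmf_entropy (map_pmf g Q) = - (\<Sum>z\<in>set_pmf Q. pmf Q z * log 2 (pmf (map_pmf g Q) (g z)))"
proof -
  let ?P = "map_pmf g Q"
  have "(\<Sum>y\<in>set_pmf ?P. pmf ?P y * log 2 (pmf ?P y))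
      = (\<Sum>y\<in>g ` set_pmf Q. (\<Sum>x\<in>{x\<in>set_pmf Q. g x = y}. pmf Q x) * log 2 (pmf ?P y))"
    by (simp only: set_map_pmf) (intro sum.cong refl arg_cong2[where f="(*)"] pmf_map_finite_sum[OF assms])
  also have "\<dots> = (\<Sum>y\<in>g ` set_pmf Q. (\<Sum>x\<in>{x\<in>set_pmf Q. g x = y}. pmf Q x * log 2 (pmf ?P (g x))))"
    by (intro sum.cong refl) (auto simp: sum_distrib_right)
  also have "\<dots> = (\<Sum>z\<in>set_pmf Q. pmf Q z * log 2 (pmf ?P (g z)))"
    using assms by (intro sum.group) auto
  finally show ?thesis unfolding pmf_entropy_def by simp
qed

lemma ent_inj:
  assumes "inj_on g (set_pmf q)"
  shows "pmf_entropy (map_pmf g q) = pmf_entropy q"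
  unfolding pmf_entropy_def using assms
  by (simp add: sum.reindex pmf_map_inj)


lemma pmf_pos_map: "z \<in> set_pmf Q \<Longrightarrow> pmf (map_pmf g Q) (g z) > 0"
  by (simp add: pmf_positive)

lemma key_sum:
  fixes J :: "('x \<times> 'y) pmf"
  assumes fin: "finite (set_pmf J)" and c: "\<forall>z\<in>set_pmf J. cA (fst z) = cB (snd z)"
  shows "(\<Sum>z\<in>set_pmf J. pmf (map_pmf fst J) (fst z) * pmf (map_pmf snd J) (snd z)
            / pmf (map_pmf (cA \<circ> fst) J) (cA (fst z))) \<le> 1"
proof -
  define pA where "pA = pmf (map_pmf fst J)"
  define pB where "pB = pmf (map_pmf snd J)"
  define pC where "pC = pmf (map_pmf (cA \<circ> fst) J)"
  define SA where "SA = set_pmf (map_pmf fst J)"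
  define SB where "SB = set_pmf (map_pmf snd J)"
  have finA: "finite SA" and finB: "finite SB" using fin by (auto simp: SA_def SB_def)
  have mapeq: "map_pmf (cA \<circ> fst) J = map_pmf cB (map_pmf snd J)"
    unfolding map_pmf_comp using c by (intro map_pmf_cong) auto
  have inner: "(\<Sum>b\<in>{b\<in>SB. cB b = c}. pB b) = pC c" for c
    unfolding pC_def mapeq pB_def SB_def
    by (rule pmf_map_finite_sum[symmetric]) (use fin in auto)
  define T where "T = Sigma SA (\<lambda>a. {b\<in>SB. cB b = cA a})"
  have sub: "set_pmf J \<subseteq> T" unfolding T_def SA_def SB_def using c by force
  have finT: "finite T" unfolding T_def using finA finB by auto
  have "(\<Sum>z\<in>set_pmf J. pA (fst z) * pB (snd z) / pC (cA (fst z)))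
        \<le> (\<Sum>z\<in>T. pA (fst z) * pB (snd z) / pC (cA (fst z)))"
    by (intro sum_mono2 finT sub) (auto simp: pA_def pB_def pC_def)
  also have "\<dots> = (\<Sum>a\<in>SA. \<Sum>b\<in>{b\<in>SB. cB b = cA a}. pA a * pB b / pC (cA a))"
    unfolding T_def by (subst sum.Sigma) (use finA finB in \<open>auto simp: split_beta\<close>)
  also have "\<dots> = (\<Sum>a\<in>SA. pA a / pC (cA a) * (\<Sum>b\<in>{b\<in>SB. cB b = cA a}. pB b))"
    by (intro sum.cong refl) (simp add: sum_distrib_left)
  also have "\<dots> = (\<Sum>a\<in>SA. pA a)"
  proof (intro sum.cong refl)
    fix a assume a: "a \<in> SA"
    then obtain z where z: "z \<in> set_pmf J" "a = fst z" unfolding SA_def by auto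
    have "pC (cA a) > 0" unfolding pC_def using pmf_pos_map[OF z(1), of "cA \<circ> fst"] z by simp
    then show "pA a / pC (cA a) * (\<Sum>b\<in>{b\<in>SB. cB b = cA a}. pB b) = pA a"
      by (simp add: inner)
  qed
  also have "\<dots> = 1" unfolding pA_def SA_def by (rule sum_pmf_eq_1) (use fin in auto)
  finally show ?thesis by (simp add: pA_def pB_def pC_def)
qed

lemma submod_core:
  fixes J :: "('x \<times> 'y) pmf"
  assumes fin: "finite (set_pmf J)" and c: "\<forall>z\<in>set_pmf J. cA (fst z) = cB (snd z)"
  shows "pmf_entropy J + pmf_entropy (map_pmf (cA \<circ> fst) J)
         \<le> pmf_entropy (map_pmf fst J) + pmf_entropy (map_pmf snd J)"
proof -
  define pA where "pA z = pmf (map_pmf fst J) (fst z)" for z :: "'x \<times> 'y"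
  define pB where "pB z = pmf (map_pmf snd J) (snd z)" for z :: "'x \<times> 'y"
  define pC where "pC z = pmf (map_pmf (cA \<circ> fst) J) (cA (fst z))" for z :: "'x \<times> 'y"
  define pJ where "pJ = pmf J"
  have eJ: "pmf_entropy J = - (\<Sum>z\<in>set_pmf J. pJ z * log 2 (pJ z))"
    using ent_map[OF fin, of id] by (simp add: pJ_def)
  have eA: "pmf_entropy (map_pmf fst J) = - (\<Sum>z\<in>set_pmf J. pJ z * log 2 (pA z))"
    using ent_map[OF fin, of fst] by (simp add: pJ_def pA_def)
  have eB: "pmf_entropy (map_pmf snd J) = - (\<Sum>z\<in>set_pmf J. pJ z * log 2 (pB z))"
    using ent_map[OF fin, of snd] by (simp add: pJ_def pB_def)
  have eC: "pmf_entropy (map_pmf (cA \<circ> fst) J) = - (\<Sum>z\<in>set_pmf J. pJ z * log 2 (pC z))"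
    using ent_map[OF fin, of "cA \<circ> fst"] by (simp add: pJ_def pC_def)
  have pt: "pJ z * log 2 (pA z) + pJ z * log 2 (pB z) - pJ z * log 2 (pJ z) - pJ z * log 2 (pC z)
        \<le> (pA z * pB z / pC z - pJ z) / ln 2" if z: "z \<in> set_pmf J" for z
  proof -
    have pos: "pJ z > 0" "pA z > 0" "pB z > 0" "pC z > 0"
      using z pmf_pos_map[OF z, of fst] pmf_pos_map[OF z, of snd] pmf_pos_map[OF z, of "cA \<circ> fst"]
      by (auto simp: pJ_def pA_def pB_def pC_def pmf_positive)
    define r where "r = pA z * pB z / (pJ z * pC z)"
    have rpos: "r > 0" using pos by (simp add: r_def)
    have "log 2 (pA z) + log 2 (pB z) - log 2 (pJ z) - log 2 (pC z) = log 2 r"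
      using pos by (simp add: r_def log_mult log_divide)
    also have "\<dots> = ln r / ln 2" by (simp add: log_def)
    also have "\<dots> \<le> (r - 1) / ln 2" using ln_le_minus_one[OF rpos] by (simp add: divide_right_mono)
    finally have "log 2 (pA z) + log 2 (pB z) - log 2 (pJ z) - log 2 (pC z) \<le> (r - 1) / ln 2" .
    then have "pJ z * (log 2 (pA z) + log 2 (pB z) - log 2 (pJ z) - log 2 (pC z)) \<le> pJ z * ((r - 1) / ln 2)"
      using pos by (intro mult_left_mono) auto
    also have "pJ z * ((r - 1) / ln 2) = (pA z * pB z / pC z - pJ z) / ln 2"
      using pos by (simp add: r_def field_simps)
    finally show ?thesis by (simp add: algebra_simps)
  qed
  have "(\<Sum>z\<in>set_pmf J. pJ z * log 2 (pA z) + pJ z * log 2 (pB z) - pJ z * log 2 (pJ z) - pJ z * log 2 (pC z))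
      \<le> (\<Sum>z\<in>set_pmf J. (pA z * pB z / pC z - pJ z) / ln 2)"
    by (rule sum_mono) (rule pt)
  also have "\<dots> = ((\<Sum>z\<in>set_pmf J. pA z * pB z / pC z) - (\<Sum>z\<in>set_pmf J. pJ z)) / ln 2"
    by (simp only: sum_divide_distrib[symmetric] sum_subtractf)
  also have "(\<Sum>z\<in>set_pmf J. pJ z) = 1" unfolding pJ_def by (rule sum_pmf_eq_1) (use fin in auto)
  also have "(\<Sum>z\<in>set_pmf J. pA z * pB z / pC z) \<le> 1"
    using key_sum[OF fin c] by (simp add: pA_def pB_def pC_def)
  hence "((\<Sum>z\<in>set_pmf J. pA z * pB z / pC z) - 1) / ln 2 \<le> 0"
    by (simp add: divide_nonpos_pos)
  finally show ?thesis unfolding eJ eA eB eC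
    by (simp add: sum.distrib sum_subtractf)
qed


lemma submod_p:
  fixes p :: "(nat \<Rightarrow> 'a) pmf"
  assumes finA: "finite A" and finB: "finite B"
    and fc: "\<forall>i\<in>A\<union>B. finite ((\<lambda>f. f i) ` set_pmf p)"
  shows "joint_entropy p (A\<union>B) + joint_entropy p (A\<inter>B) \<le> joint_entropy p A + joint_entropy p B"
proof -
  define F where "F i = (\<lambda>f. f i) ` set_pmf p" for i
  define J where "J = map_pmf (\<lambda>f. (restrict f A, restrict f B)) p"
  have "set_pmf J \<subseteq> PiE A F \<times> PiE B F" unfolding J_def F_def by auto
  moreover have "finite (PiE A F \<times> PiE B F)"
    using finA finB fc by (intro finite_cartesian_product finite_PiE) (auto simp: F_def)
  ultimately have fin: "finite (set_pmf J)" by (rule finite_subset)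
  have c: "\<forall>z\<in>set_pmf J. (\<lambda>u. restrict u (A\<inter>B)) (fst z) = (\<lambda>u. restrict u (A\<inter>B)) (snd z)"
    unfolding J_def by (auto simp: Int_commute)
  note core = submod_core[OF fin c]
  have e1: "map_pmf fst J = map_pmf (\<lambda>f. restrict f A) p" unfolding J_def map_pmf_comp by simp
  have e2: "map_pmf snd J = map_pmf (\<lambda>f. restrict f B) p" unfolding J_def map_pmf_comp by simp
  have e3: "map_pmf ((\<lambda>u. restrict u (A\<inter>B)) \<circ> fst) J = map_pmf (\<lambda>f. restrict f (A\<inter>B)) p"
    unfolding J_def map_pmf_comp by (simp add: o_def)
  define \<phi> where "\<phi> u = (restrict u A, restrict u B)" for u :: "nat \<Rightarrow> 'a"
  have "J = map_pmf \<phi> (map_pmf (\<lambda>f. restrict f (A\<union>B)) p)"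
    unfolding J_def map_pmf_comp \<phi>_def by (intro map_pmf_cong refl) (auto simp: Int_absorb1)
  moreover have "inj_on \<phi> (set_pmf (map_pmf (\<lambda>f. restrict f (A\<union>B)) p))"
  proof (rule inj_onI)
    fix u v assume u: "u \<in> set_pmf (map_pmf (\<lambda>f. restrict f (A\<union>B)) p)"
      and v: "v \<in> set_pmf (map_pmf (\<lambda>f. restrict f (A\<union>B)) p)" and eq: "\<phi> u = \<phi> v"
    show "u = v"
    proof
      fix x
      from eq have a: "restrict u A = restrict v A" and b: "restrict u B = restrict v B"
        by (auto simp: \<phi>_def)
      show "u x = v x"
      proof (cases "x \<in> A")
        case True then show ?thesis using fun_cong[OF a, of x] by simp
      next
        case nA: False
        show ?thesis
        proof (cases "x \<in> B")
          case True then show ?thesis using fun_cong[OF b, of x] by simp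
        next
          case False then show ?thesis using u v nA by auto
        qed
      qed
    qed
  qed
  ultimately have e0: "pmf_entropy J = joint_entropy p (A\<union>B)"
    unfolding joint_entropy_def by (simp add: ent_inj)
  show ?thesis using core unfolding e0 e1 e2 e3 joint_entropy_def .
qed

lemma interp:
  fixes h :: "nat \<Rightarrow> real"
  assumes conc: "\<And>k. 2 \<le> k \<Longrightarrow> k+1 \<le> m \<Longrightarrow> h (k+1) + h (k-1) \<le> 2 * h k"
    and a: "1 \<le> a" "a \<le> m"
  shows "(real m - 1) * h a \<ge> (real m - real a) * h 1 + (real a - 1) * h m"
proof -
  define d where "d k = h k - h (k-1)" for k
  have d1: "d (k+1) \<le> d k" if "2 \<le> k" "k+1 \<le> m" for k
    using conc[OF that] by (simp add: d_def)
  have dec: "d j \<le> d i" if "2 \<le> i" "i \<le> j" "j \<le> m" for i j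
    using that
  proof (induction j)
    case 0 then show ?case by simp
  next
    case (Suc j)
    show ?case
    proof (cases "i = Suc j")
      case True then show ?thesis by simp
    next
      case False
      then have "i \<le> j" using Suc by simp
      then have "d j \<le> d i" using Suc by simp
      moreover have "d (j+1) \<le> d j" using Suc \<open>i \<le> j\<close> by (intro d1) auto
      ultimately show ?thesis by simp
    qed
  qed
  show ?thesis
  proof (cases "a = 1 \<or> a = m")
    case True then show ?thesis by (auto simp: algebra_simps)
  next
    case False
    then have a2: "2 \<le> a" "a < m" using a by auto
    have L1: "h b - h 1 \<ge> (real b - 1) * d b" if "2 \<le> b" "b \<le> m" for b
      using that
    proof (induction b)
      case 0 then show ?case by simp
    next
      case (Suc b)
      show ?case
      proof (cases "b = 1")
        case True then show ?thesis by (simp add: d_def)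
      next
        case False
        then have b2: "2 \<le> b" using Suc by simp
        have IH: "h b - h 1 \<ge> (real b - 1) * d b" using Suc b2 by simp
        have "d (b+1) \<le> d b" using b2 Suc by (intro d1) auto
        then have "(real b - 1) * d (b+1) \<le> (real b - 1) * d b"
          using b2 by (intro mult_left_mono) auto
        moreover have "h (Suc b) = h b + d (Suc b)" by (simp add: d_def)
        ultimately show ?thesis using IH by (simp add: algebra_simps)
      qed
    qed
    have L2: "h j - h a \<le> (real j - real a) * d a" if "a \<le> j" "j \<le> m" for j
      using that
    proof (induction j)
      case 0 then show ?case by simp
    next
      case (Suc j)
      show ?case
      proof (cases "a = Suc j")
        case True then show ?thesis by simp
      next
        case False
        then have aj: "a \<le> j" using Suc by simp
        have IH: "h j - h a \<le> (real j - real a) * d a" using Suc aj by simp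
        have "d (Suc j) \<le> d a" using aj Suc a2 by (intro dec) auto
        moreover have "h (Suc j) = h j + d (Suc j)" by (simp add: d_def)
        ultimately show ?thesis using IH by (simp add: algebra_simps)
      qed
    qed
    have A1: "h a - h 1 \<ge> (real a - 1) * d a" using L1 a2 by simp
    have A2: "h m - h a \<le> (real m - real a) * d a" using L2 a2 by simp
    have "(real m - real a) * (h a - h 1) \<ge> (real m - real a) * ((real a - 1) * d a)"
      using A1 a2 by (intro mult_left_mono) auto
    moreover have "(real a - 1) * (h m - h a) \<le> (real a - 1) * ((real m - real a) * d a)"
      using A2 a2 by (intro mult_left_mono) auto
    ultimately show ?thesis by (simp add: algebra_simps)
  qed
qed


theorem corollary1:
  fixes p :: "(nat \<Rightarrow> 'a) pmf" and m :: nat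
  assumes "m \<ge> 2"
    and "\<forall>i\<in>{1..m}. finite ((\<lambda>f. f i) ` set_pmf p)"
    and "isentropic p {1..m}"
  shows "type_S p {1..m}"
proof -
  define M where "M = {1..m}"
  define h where "h k = joint_entropy p {1..k}" for k
  have m2: "m \<ge> 2" using assms(1) .
  have fc: "\<forall>i\<in>M. finite ((\<lambda>f. f i) ` set_pmf p)" using assms(2) by (simp add: M_def)
  have hA: "joint_entropy p A = h (card A)" if "A \<subseteq> M" "A \<noteq> {}" for A
  proof -
    have fA: "finite A" using that finite_subset by (auto simp: M_def)
    have "card A \<le> m" using card_mono[OF _ that(1)] by (simp add: M_def)
    moreover have "card A \<ge> 1" using fA that(2) by (simp add: Suc_le_eq card_gt_0_iff)
    ultimately have "{1..card A} \<subseteq> {1..m}" "{1..card A} \<noteq> {}" "card {1..card A} = card A"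
      by auto
    then show ?thesis using assms(3) that unfolding isentropic_def h_def M_def
      by (metis (no_types, lifting))
  qed
  have conc: "h (k+1) + h (k-1) \<le> 2 * h k" if k: "2 \<le> k" "k+1 \<le> m" for k
  proof -
    define A where "A = {1..k}"
    define B where "B = insert (k+1) {1..k-1}"
    have U: "A \<union> B = {1..k+1}" using k by (auto simp: A_def B_def)
    have I: "A \<inter> B = {1..k-1}" using k by (auto simp: A_def B_def)
    have "joint_entropy p (A\<union>B) + joint_entropy p (A\<inter>B) \<le> joint_entropy p A + joint_entropy p B"
      using fc k by (intro submod_p) (auto simp: A_def B_def M_def)
    moreover have "joint_entropy p B = h k"
    proof -
      have "B \<subseteq> M" "B \<noteq> {}" using k by (auto simp: B_def M_def)
      moreover have "card B = k" using k by (simp add: B_def)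
      ultimately show ?thesis using hA by metis
    qed
    ultimately show ?thesis unfolding U I by (simp add: h_def A_def)
  qed
  have Dinterp: "(real m - 1) * h a \<ge> (real m - real a) * h 1 + (real a - 1) * h m"
    if "1 \<le> a" "a \<le> m" for a
    using interp[of m h a] conc that by blast
  show ?thesis unfolding type_S_def
  proof (intro allI impI)
    fix P assume P: "partition_on {1..m} P \<and> 2 \<le> card P"
    then have part: "partition_on M P" and k2: "2 \<le> card P" by (auto simp: M_def)
    have finP: "finite P" using k2 card.infinite by force
    have sub: "A \<subseteq> M" "A \<noteq> {}" if "A \<in> P" for A
      using part that unfolding partition_on_def by auto
    have finA: "finite A" if "A \<in> P" for A using sub[OF that] finite_subset by (auto simp: M_def)
    have cardsum: "(\<Sum>A\<in>P. card A) = m"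
    proof -
      have "card (\<Union>P) = (\<Sum>A\<in>P. card A)"
        using part finA by (intro card_Union_disjoint) (auto simp: partition_on_def)
      then show ?thesis using part by (simp add: partition_on_def M_def)
    qed
    have cs_real: "(\<Sum>A\<in>P. real (card A)) = real m" using cardsum by (metis of_nat_sum)
    have kle: "card P \<le> m"
    proof -
      have "(\<Sum>A\<in>P. 1) \<le> (\<Sum>A\<in>P. card A)"
        using finA sub by (intro sum_mono) (auto simp: Suc_le_eq card_gt_0_iff)
      then show ?thesis using cardsum by simp
    qed
    define k where "k = card P"
    define S where "S = (\<Sum>A\<in>P. joint_entropy p A)"
    have S_eq: "S = (\<Sum>A\<in>P. h (card A))" unfolding S_def using hA sub by (intro sum.cong) auto
    have "(real m - 1) * S = (\<Sum>A\<in>P. (real m - 1) * h (card A))"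
      by (simp add: S_eq sum_distrib_left)
    also have "\<dots> \<ge> (\<Sum>A\<in>P. (real m - real (card A)) * h 1 + (real (card A) - 1) * h m)"
    proof (intro sum_mono Dinterp)
      fix A assume "A \<in> P"
      then show "1 \<le> card A" "card A \<le> m" using sub[of A] finA[of A]
        by (auto simp: Suc_le_eq card_gt_0_iff M_def intro!: card_mono[of "{1..m}", simplified])
    qed
    also have "(\<Sum>A\<in>P. (real m - real (card A)) * h 1 + (real (card A) - 1) * h m)
        = (real k * real m - real m) * h 1 + (real m - real k) * h m"
    proof -
      have "(\<Sum>A\<in>P. (real m - real (card A)) * h 1 + (real (card A) - 1) * h m)
          = (\<Sum>A\<in>P. real m - real (card A)) * h 1 + (\<Sum>A\<in>P. real (card A) - 1) * h m"
        by (simp only: sum.distrib sum_distrib_right)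
      also have "(\<Sum>A\<in>P. real m - real (card A)) = real k * real m - real m"
        by (simp only: sum_subtractf cs_real sum_constant k_def of_nat_mult mult.commute)
      also have "(\<Sum>A\<in>P. real (card A) - 1) = real m - real k"
        by (simp only: sum_subtractf cs_real sum_constant k_def)
      finally show ?thesis .
    qed
    finally have main: "(real m - 1) * S \<ge> (real k * real m - real m) * h 1 + (real m - real k) * h m" .
    have HM: "joint_entropy p M = h m" by (simp add: h_def M_def)
    have cardS: "card (singleton_partition M) = m"
      by (simp add: singleton_partition_def card_image M_def)
    have sumS: "(\<Sum>A\<in>singleton_partition M. joint_entropy p A) = real m * h 1"
    proof -
      have "(\<Sum>A\<in>singleton_partition M. joint_entropy p A) = (\<Sum>i\<in>M. joint_entropy p {i})"
        by (simp add: singleton_partition_def sum.reindex)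
      also have "\<dots> = (\<Sum>i\<in>M. h 1)" using hA by (intro sum.cong) auto
      finally show ?thesis by (simp add: M_def)
    qed
    have k2r: "real k \<ge> 2" using k2 by (simp add: k_def)
    have m2r: "real m \<ge> 2" using m2 by simp
    have DS: "Delta p M (singleton_partition M) = (real m * h 1 - h m) / (real m - 1)"
      unfolding Delta_def cardS sumS HM by simp
    have DP: "Delta p M P = (S - h m) / (real k - 1)"
      unfolding Delta_def S_def k_def HM by simp
    have "(real m * h 1 - h m) / (real m - 1) \<le> (S - h m) / (real k - 1)"
    proof -
      have "(real m * h 1 - h m) * (real k - 1) \<le> (S - h m) * (real m - 1)"
        using main by (simp add: algebra_simps)
      then show ?thesis using k2r m2r by (simp add: divide_le_eq le_divide_eq field_simps)
    qed
    then show "Delta p {1..m} (singleton_partition {1..m}) \<le> Delta p {1..m} P"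
      using DS DP by (simp add: M_def)
  qed
qed

end
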